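(* Let $d,n\in\mathbb{N}$, $p\ge1$, and $\Omega\subseteq\mathbb{R}^d$ compact. On the space $\mathcal{S}_{=n}(\Omega)$ of multisets of exactly $n$ elements of $\Omega$, endowed with the metric $W_1$, define $s(X;a)=\mathrm{sort}(a^TX)\in\mathbb{R}^n$, where $X=\{\!\!\{ x_1,\dots,x_n\}\!\!\}$, $a^TX=(a\cdot x_1,\dots,a\cdot x_n)$, $\mathrm{sort}$ sorts entries nondecreasingly, and $a$ is uniform on $S^{d-1}$; the output metric is $\ell_p$. Then $s$ is uniformly Lipschitz and lower Lipschitz in expectation.
   Context: $W_1(\{\!\!\{ x_j\}\!\!\},\{\!\!\{ y_j\}\!\!\})=\min_{\tau\in S_n}\sum_{j=1}^n\|x_j-y_{\tau(j)}\|_1$. A parametric function is uniformly Lipschitz if it is $L$-Lipschitz in $x$ for every parameter with a common $L$; it is lower Lipschitz in expectation if there is $c>0$ with $c^p\le\mathbb{E}_a\left[\left(\frac{\|s(X;a)-s(Y;a)\|_p}{W_1(X,Y)}\right)^p\right]$ whenever $W_1(X,Y)>0$. *)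

theory Defs
  imports "HOL-Analysis.Analysis" "HOL-Library.Multiset" "HOL-Combinatorics.Permutations"
begin

definition l1norm :: "'d::euclidean_space \<Rightarrow> real" where
  "l1norm x = (\<Sum>b\<in>Basis. \<bar>x \<bullet> b\<bar>)"

definition S_eq :: "nat \<Rightarrow> 'd set \<Rightarrow> 'd multiset set" where
  "S_eq n \<Omega> = {X. size X = n \<and> set_mset X \<subseteq> \<Omega>}"

definition W1 :: "'d::euclidean_space multiset \<Rightarrow> 'd multiset \<Rightarrow> real" where
  "W1 X Y = Min {(\<Sum>j<length xs. l1norm (xs ! j - ys ! (\<tau> j))) | xs ys \<tau>.
      mset xs = X \<and> mset ys = Y \<and> \<tau> permutes {..<length xs}}"

definition sort_embed :: "'d::euclidean_space multiset \<Rightarrow> 'd \<Rightarrow> real list" where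
  "sort_embed X a = sorted_list_of_multiset (image_mset (\<lambda>x. a \<bullet> x) X)"

definition lp_dist :: "real \<Rightarrow> real list \<Rightarrow> real list \<Rightarrow> real" where
  "lp_dist p u v = (\<Sum>i<length u. \<bar>u ! i - v ! i\<bar> powr p) powr (1 / p)"

text \<open>Uniform (normalized surface) probability measure on S^{d-1}: push-forward of the
  uniform distribution on the unit ball under x \<mapsto> x/|x|.\<close>
definition uniform_sphere :: "'d::euclidean_space measure" where
  "uniform_sphere = distr (uniform_measure lborel (ball 0 1)) borel (\<lambda>x. x /\<^sub>R norm x)"

definition uniformly_lipschitz ::
    "('x \<Rightarrow> 'a \<Rightarrow> 'y) \<Rightarrow> 'x set \<Rightarrow> 'a set \<Rightarrow> ('x \<Rightarrow> 'x \<Rightarrow> real) \<Rightarrow> ('y \<Rightarrow> 'y \<Rightarrow> real) \<Rightarrow> bool" where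
  "uniformly_lipschitz s D A dX dY \<longleftrightarrow>
     (\<exists>L. \<forall>a\<in>A. \<forall>X\<in>D. \<forall>Y\<in>D. dY (s X a) (s Y a) \<le> L * dX X Y)"

definition lower_lipschitz_in_expectation ::
    "('x \<Rightarrow> 'a \<Rightarrow> 'y) \<Rightarrow> 'x set \<Rightarrow> 'a measure \<Rightarrow> real \<Rightarrow> ('x \<Rightarrow> 'x \<Rightarrow> real) \<Rightarrow> ('y \<Rightarrow> 'y \<Rightarrow> real) \<Rightarrow> bool" where
  "lower_lipschitz_in_expectation s D M p dX dY \<longleftrightarrow>
     (\<exists>c>0. \<forall>X\<in>D. \<forall>Y\<in>D. dX X Y > 0 \<longrightarrow>
        c powr p \<le> (\<integral>a. (dY (s X a) (s Y a) / dX X Y) powr p \<partial>M))"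

end

theory Submission
  imports Defs "HOL-Probability.Probability_Measure"
begin

lemma sl_snoc:
  fixes M :: "real multiset"
  assumes "\<forall>x\<in>#M. x \<le> a"
  shows "sorted_list_of_multiset (add_mset a M) = sorted_list_of_multiset M @ [a]"
proof -
  have "mset (sorted_list_of_multiset M @ [a]) = add_mset a M" by simp
  moreover have "sorted (sorted_list_of_multiset M @ [a])"
    using assms by (simp add: sorted_append)
  ultimately show ?thesis
    by (metis properties_for_sort sorted_list_of_multiset_mset)
qed

definition cost :: "(real \<times> real) multiset \<Rightarrow> real" where
  "cost P = sum_mset (image_mset (\<lambda>(x,y). \<bar>x - y\<bar>) P)"

definition sdist :: "(real \<times> real) multiset \<Rightarrow> real" where
  "sdist P = (\<Sum>i<size P. \<bar>sorted_list_of_multiset (image_mset fst P) ! i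
        - sorted_list_of_multiset (image_mset snd P) ! i\<bar>)"

lemma four_point:
  fixes a b c d :: real
  assumes "a \<ge> b" "c \<ge> d"
  shows "\<bar>a - c\<bar> + \<bar>b - d\<bar> \<le> \<bar>a - d\<bar> + \<bar>b - c\<bar>"
  using assms by linarith

lemma sdist_add:
  assumes "\<forall>x\<in>#image_mset fst P. x \<le> a" "\<forall>x\<in>#image_mset snd P. x \<le> c"
  shows "sdist (add_mset (a,c) P) = sdist P + \<bar>a - c\<bar>"
proof -
  have 1: "sorted_list_of_multiset (image_mset fst (add_mset (a,c) P)) = sorted_list_of_multiset (image_mset fst P) @ [a]"
    using sl_snoc[OF assms(1)] by simp
  have 2: "sorted_list_of_multiset (image_mset snd (add_mset (a,c) P)) = sorted_list_of_multiset (image_mset snd P) @ [c]"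
    using sl_snoc[OF assms(2)] by simp
  have l1: "length (sorted_list_of_multiset (image_mset fst P)) = size P"
    by (metis mset_sorted_list_of_multiset size_image_mset size_mset)
  have l2: "length (sorted_list_of_multiset (image_mset snd P)) = size P"
    by (metis mset_sorted_list_of_multiset size_image_mset size_mset)
  show ?thesis unfolding sdist_def 1 2
    using l1 l2 by (simp add: nth_append)
qed

lemma rearr: "sdist P \<le> cost P"
proof (induction "size P" arbitrary: P rule: less_induct)
  case less
  show ?case
  proof (cases "P = {#}")
    case True then show ?thesis by (simp add: sdist_def cost_def)
  next
    case False
    define A where "A = Max (set_mset (image_mset fst P))"
    define C where "C = Max (set_mset (image_mset snd P))"
    have "A \<in> set_mset (image_mset fst P)" unfolding A_def using False by (intro Max_in) auto
    then obtain y1 where p1: "(A, y1) \<in># P" by auto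
    have "C \<in> set_mset (image_mset snd P)" unfolding C_def using False by (intro Max_in) auto
    then obtain x2 where p2: "(x2, C) \<in># P" by auto
    have Amax: "\<And>x y. (x,y) \<in># P \<Longrightarrow> x \<le> A" unfolding A_def
    proof -
      fix x y assume "(x,y) \<in># P" hence "x \<in># image_mset fst P" by force
      thus "x \<le> Max (set_mset (image_mset fst P))" by (rule Max_ge[OF finite_set_mset])
    qed
    have Cmax: "\<And>x y. (x,y) \<in># P \<Longrightarrow> y \<le> C" unfolding C_def
    proof -
      fix x y assume "(x,y) \<in># P" hence "y \<in># image_mset snd P" by force
      thus "y \<le> Max (set_mset (image_mset snd P))" by (rule Max_ge[OF finite_set_mset])
    qed
    show ?thesis
    proof (cases "(A, y1) = (x2, C)")
      case True
      define Q where "Q = P - {#(A,C)#}"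
      have PQ: "P = add_mset (A,C) Q" unfolding Q_def using p1 True by auto
      have "sdist Q \<le> cost Q" using less PQ by (metis lessI size_add_mset)
      moreover have "sdist P = sdist Q + \<bar>A - C\<bar>" unfolding PQ
      proof (rule sdist_add)
        have sub: "\<And>z. z \<in># Q \<Longrightarrow> z \<in># P" unfolding PQ by simp
        show "\<forall>x\<in>#image_mset fst Q. x \<le> A" using Amax sub by force
        show "\<forall>x\<in>#image_mset snd Q. x \<le> C" using Cmax sub by force
      qed
      moreover have "cost P = cost Q + \<bar>A - C\<bar>" unfolding PQ cost_def by simp
      ultimately show ?thesis by simp
    next
      case False
      define R where "R = P - {#(A,y1)#} - {#(x2,C)#}"
      have PR: "P = add_mset (A,y1) (add_mset (x2,C) R)" 
      proof -
        have "(x2,C) \<in># P - {#(A,y1)#}" using p2 False by (auto simp: in_diff_count)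
        then have "add_mset (x2,C) R = P - {#(A,y1)#}" unfolding R_def by (rule insert_DiffM)
        then show ?thesis using p1 by (metis insert_DiffM)
      qed
      define Q where "Q = add_mset (x2,y1) R"
      have sQ: "size Q < size P" unfolding Q_def PR by simp
      have "sdist Q \<le> cost Q" using less sQ by blast
      moreover have "sdist P = sdist Q + \<bar>A - C\<bar>"
      proof -
        have e1: "image_mset fst P = image_mset fst (add_mset (A,C) Q)"
          unfolding PR Q_def by simp
        have e2: "image_mset snd P = image_mset snd (add_mset (A,C) Q)"
          unfolding PR Q_def by (simp add: add_mset_commute)
        have e3: "size P = size (add_mset (A,C) Q)" unfolding PR Q_def by simp
        have "sdist P = sdist (add_mset (A,C) Q)"
          unfolding sdist_def e1 e2 e3 ..
        also have "\<dots> = sdist Q + \<bar>A - C\<bar>"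
        proof (rule sdist_add)
          have "x2 \<le> A" using Amax p2 by blast
          moreover have "\<And>x y. (x,y) \<in># R \<Longrightarrow> x \<le> A" proof -
            fix x y assume "(x,y) \<in># R" then have "(x,y) \<in># P" by (simp add: PR)
            then show "x \<le> A" by (rule Amax) qed
          ultimately show "\<forall>x\<in>#image_mset fst Q. x \<le> A" unfolding Q_def by auto
          have "y1 \<le> C" using Cmax p1 by blast
          moreover have "\<And>x y. (x,y) \<in># R \<Longrightarrow> y \<le> C" proof -
            fix x y assume "(x,y) \<in># R" then have "(x,y) \<in># P" by (simp add: PR)
            then show "y \<le> C" by (rule Cmax) qed
          ultimately show "\<forall>x\<in>#image_mset snd Q. x \<le> C" unfolding Q_def by auto
        qed
        finally show ?thesis .
      qed
      moreover have "cost P \<ge> cost Q + \<bar>A - C\<bar>"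
      proof -
        have "x2 \<le> A" using Amax p2 by blast
        moreover have "y1 \<le> C" using Cmax p1 by blast
        ultimately have "\<bar>A - C\<bar> + \<bar>x2 - y1\<bar> \<le> \<bar>A - y1\<bar> + \<bar>x2 - C\<bar>" by linarith
        then show ?thesis unfolding PR Q_def cost_def by simp
      qed
      ultimately show ?thesis by simp
    qed
  qed
qed

lemma mset_nth: "mset xs = image_mset (\<lambda>j. xs ! j) (mset_set {..<length xs})"
proof -
  have "mset xs = mset (map (nth xs) [0..<length xs])" by (simp add: map_nth)
  also have "\<dots> = image_mset (nth xs) (mset_set {..<length xs})"
    by (simp add: mset_upt lessThan_atLeast0)
  finally show ?thesis .
qed

lemma image_mset_perm:
  assumes "\<tau> permutes A" "finite A"
  shows "image_mset (\<lambda>j. f (\<tau> j)) (mset_set A) = image_mset f (mset_set A)"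
proof -
  have "image_mset (\<lambda>j. f (\<tau> j)) (mset_set A) = image_mset f (image_mset \<tau> (mset_set A))"
    by (simp add: multiset.map_comp comp_def)
  also have "image_mset \<tau> (mset_set A) = mset_set (\<tau> ` A)"
    using assms by (intro image_mset_mset_set) (meson permutes_inj_on)
  also have "\<tau> ` A = A" using assms by (simp add: permutes_image)
  finally show ?thesis .
qed

lemma length_sort_embed[simp]: "length (sort_embed X a) = size X"
  unfolding sort_embed_def
  by (metis mset_sorted_list_of_multiset size_image_mset size_mset)

lemma match_bound:
  fixes xs ys :: "'d::euclidean_space list"
  assumes "length ys = length xs" "\<tau> permutes {..<length xs}"
  shows "(\<Sum>i<length xs. \<bar>sort_embed (mset xs) a ! i - sort_embed (mset ys) a ! i\<bar>)
     \<le> (\<Sum>j<length xs. \<bar>a \<bullet> xs ! j - a \<bullet> ys ! (\<tau> j)\<bar>)"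
proof -
  define n where "n = length xs"
  define P where "P = image_mset (\<lambda>j. (a \<bullet> xs ! j, a \<bullet> ys ! (\<tau> j))) (mset_set {..<n})"
  have f: "image_mset fst P = image_mset (\<lambda>x. a \<bullet> x) (mset xs)"
    unfolding P_def n_def by (subst mset_nth) (simp add: multiset.map_comp comp_def)
  have "image_mset snd P = image_mset (\<lambda>j. a \<bullet> ys ! j) (mset_set {..<n})"
    unfolding P_def using image_mset_perm[OF assms(2)[folded n_def], of "\<lambda>j. a \<bullet> ys ! j"]
    by (simp add: multiset.map_comp comp_def)
  also have "\<dots> = image_mset (\<lambda>x. a \<bullet> x) (mset ys)"
    using assms(1) mset_nth[of ys] unfolding n_def by (simp add: multiset.map_comp comp_def)
  finally have s: "image_mset snd P = image_mset (\<lambda>x. a \<bullet> x) (mset ys)" .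
  have sz: "size P = n" unfolding P_def by simp
  have "sdist P \<le> cost P" by (rule rearr)
  moreover have "sdist P = (\<Sum>i<length xs. \<bar>sort_embed (mset xs) a ! i - sort_embed (mset ys) a ! i\<bar>)"
    unfolding sdist_def sz f s sort_embed_def n_def ..
  moreover have "cost P = (\<Sum>j<length xs. \<bar>a \<bullet> xs ! j - a \<bullet> ys ! (\<tau> j)\<bar>)"
    unfolding cost_def P_def n_def by (simp add: sum_unfold_sum_mset multiset.map_comp comp_def)
  ultimately show ?thesis by simp
qed

lemma pnorm_le_sum:
  fixes w :: "nat \<Rightarrow> real"
  assumes "p \<ge> 1" "\<And>i. w i \<ge> 0"
  shows "(\<Sum>i<n. w i powr p) powr (1/p) \<le> (\<Sum>i<n. w i)"
proof -
  define S where "S = (\<Sum>i<n. w i)"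
  have S0: "S \<ge> 0" unfolding S_def using assms by (simp add: sum_nonneg)
  have wS: "w i \<le> S" if "i < n" for i
    unfolding S_def using assms(2) that by (intro member_le_sum) auto
  have "(\<Sum>i<n. w i powr p) \<le> (\<Sum>i<n. w i * S powr (p - 1))"
  proof (rule sum_mono)
    fix i assume "i \<in> {..<n}"
    have "w i powr p = w i * w i powr (p - 1)" using powr_add[of "w i" 1 "p-1"] assms(2)[of i] by simp
    also have "\<dots> \<le> w i * S powr (p - 1)"
      using assms wS \<open>i \<in> {..<n}\<close> by (auto intro!: mult_left_mono powr_mono2)
    finally show "w i powr p \<le> w i * S powr (p - 1)" .
  qed
  also have "\<dots> = S * S powr (p - 1)" unfolding S_def by (simp add: sum_distrib_right)
  also have "\<dots> = S powr p"
  proof (cases "S = 0")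
    case True then show ?thesis using assms by simp
  next
    case False then show ?thesis using powr_add[of S 1 "p-1"] S0 by simp
  qed
  finally have "(\<Sum>i<n. w i powr p) powr (1/p) \<le> (S powr p) powr (1/p)"
    using assms by (intro powr_mono2) (auto intro!: sum_nonneg)
  also have "\<dots> = S" using assms S0 by (simp add: powr_powr)
  finally show ?thesis unfolding S_def .
qed

lemma pnorm_ge_each:
  fixes w :: "nat \<Rightarrow> real"
  assumes "p \<ge> 1" "\<And>i. w i \<ge> 0" "k < n"
  shows "w k \<le> (\<Sum>i<n. w i powr p) powr (1/p)"
proof -
  have "w k = (w k powr p) powr (1/p)" using assms by (simp add: powr_powr)
  also have "\<dots> \<le> (\<Sum>i<n. w i powr p) powr (1/p)"
    using assms by (intro powr_mono2 member_le_sum) auto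
  finally show ?thesis .
qed

lemma pnorm_ge_avg:
  fixes w :: "nat \<Rightarrow> real"
  assumes "p \<ge> 1" "\<And>i. w i \<ge> 0"
  shows "(\<Sum>i<n. w i) \<le> real n * (\<Sum>i<n. w i powr p) powr (1/p)"
proof -
  have "(\<Sum>i<n. w i) \<le> (\<Sum>i<n. (\<Sum>i<n. w i powr p) powr (1/p))"
    by (rule sum_mono) (use pnorm_ge_each[OF assms] in auto)
  then show ?thesis by simp
qed

lemma lp_le_l1:
  assumes "p \<ge> 1"
  shows "lp_dist p u v \<le> (\<Sum>i<length u. \<bar>u ! i - v ! i\<bar>)"
  unfolding lp_dist_def by (rule pnorm_le_sum) (use assms in auto)

lemma lp_ge_l1:
  assumes "p \<ge> 1"
  shows "(\<Sum>i<length u. \<bar>u ! i - v ! i\<bar>) \<le> real (length u) * lp_dist p u v"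
  unfolding lp_dist_def by (rule pnorm_ge_avg) (use assms in auto)

definition W1set :: "'d::euclidean_space multiset \<Rightarrow> 'd multiset \<Rightarrow> real set" where
  "W1set X Y = {(\<Sum>j<length xs. l1norm (xs ! j - ys ! (\<tau> j))) | xs ys \<tau>.
      mset xs = X \<and> mset ys = Y \<and> \<tau> permutes {..<length xs}}"

lemma W1set_finite: "finite (W1set X Y)"
proof -
  let ?F = "\<lambda>(xs,ys,\<tau>). (\<Sum>j<length xs. l1norm (xs ! j - ys ! (\<tau> j)))"
  have "W1set X Y \<subseteq> ?F ` ({xs. set xs \<subseteq> set_mset X \<and> length xs = size X} \<times>
      {ys. set ys \<subseteq> set_mset Y \<and> length ys = size Y} \<times> {\<tau>. \<tau> permutes {..<size X}})"
    unfolding W1set_def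
    apply clarsimp
    subgoal for xs ys \<tau> by (rule image_eqI[where x="(xs,ys,\<tau>)"]) auto
    done
  moreover have "finite ({xs. set xs \<subseteq> set_mset X \<and> length xs = size X} \<times>
      {ys. set ys \<subseteq> set_mset Y \<and> length ys = size Y} \<times> {\<tau>. \<tau> permutes {..<size X}})"
    by (intro finite_cartesian_product finite_lists_length_eq finite_permutations) auto
  ultimately show ?thesis by (meson finite_imageI finite_subset)
qed

lemma W1set_ne: "W1set X Y \<noteq> {}"
proof -
  obtain xs where "mset xs = X" using ex_mset by blast
  moreover obtain ys where "mset ys = Y" using ex_mset by blast
  ultimately show ?thesis unfolding W1set_def using permutes_id by blast
qed

lemma W1_eq: "W1 X Y = Min (W1set X Y)" unfolding W1_def W1set_def ..

lemma W1_le: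
  assumes "mset xs = X" "mset ys = Y" "\<tau> permutes {..<length xs}"
  shows "W1 X Y \<le> (\<Sum>j<length xs. l1norm (xs ! j - ys ! (\<tau> j)))"
  unfolding W1_eq using assms W1set_finite by (intro Min_le) (auto simp: W1set_def)

lemma W1_attained:
  obtains xs ys \<tau> where "mset xs = X" "mset ys = Y" "\<tau> permutes {..<length xs}"
    "W1 X Y = (\<Sum>j<length xs. l1norm (xs ! j - ys ! (\<tau> j)))"
proof -
  have "W1 X Y \<in> W1set X Y" unfolding W1_eq using W1set_finite W1set_ne by (rule Min_in)
  then show ?thesis using that unfolding W1set_def by blast
qed

lemma norm_le_l1norm: "norm z \<le> l1norm z"
  unfolding l1norm_def using norm_le_l1[of z] by simp

lemma l1norm_le_norm: "l1norm (z::'d::euclidean_space) \<le> real DIM('d) * norm z"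
proof -
  have "l1norm z \<le> (\<Sum>b\<in>(Basis::'d set). norm z)"
    unfolding l1norm_def by (rule sum_mono) (simp add: Basis_le_norm)
  then show ?thesis by simp
qed

lemma upper_bound:
  fixes X Y :: "'d::euclidean_space multiset"
  assumes "p \<ge> 1" "size X = size Y" "norm a \<le> 1"
  shows "lp_dist p (sort_embed X a) (sort_embed Y a) \<le> W1 X Y"
proof -
  obtain xs ys \<tau> where xs: "mset xs = X" "mset ys = Y" "\<tau> permutes {..<length xs}"
    and W: "W1 X Y = (\<Sum>j<length xs. l1norm (xs ! j - ys ! (\<tau> j)))"
    by (rule W1_attained)
  have len: "length ys = length xs" using xs assms(2) by (metis size_mset)
  have "lp_dist p (sort_embed X a) (sort_embed Y a)
      \<le> (\<Sum>i<length xs. \<bar>sort_embed X a ! i - sort_embed Y a ! i\<bar>)"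
    using lp_le_l1[OF assms(1), of "sort_embed X a" "sort_embed Y a"] xs(1)[symmetric] by simp
  also have "\<dots> \<le> (\<Sum>j<length xs. \<bar>a \<bullet> xs ! j - a \<bullet> ys ! (\<tau> j)\<bar>)"
    using match_bound[OF len xs(3), of a] xs by simp
  also have "\<dots> \<le> (\<Sum>j<length xs. l1norm (xs ! j - ys ! (\<tau> j)))"
  proof (rule sum_mono)
    fix j
    have "\<bar>a \<bullet> xs ! j - a \<bullet> ys ! (\<tau> j)\<bar> = \<bar>a \<bullet> (xs ! j - ys ! (\<tau> j))\<bar>"
      by (simp add: inner_diff_right)
    also have "\<dots> \<le> norm a * norm (xs ! j - ys ! (\<tau> j))" by (rule Cauchy_Schwarz_ineq2)
    also have "\<dots> \<le> norm (xs ! j - ys ! (\<tau> j))"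
      using assms(3) by (simp add: mult_left_le_one_le)
    also have "\<dots> \<le> l1norm (xs ! j - ys ! (\<tau> j))" by (rule norm_le_l1norm)
    finally show "\<bar>a \<bullet> xs ! j - a \<bullet> ys ! (\<tau> j)\<bar> \<le> l1norm (xs ! j - ys ! (\<tau> j))" .
  qed
  finally show ?thesis using W by simp
qed

lemma sorted_enum:
  fixes X :: "'d::euclidean_space multiset"
  obtains xs where "mset xs = X" "sort_embed X a = map (\<lambda>x. a \<bullet> x) xs"
proof -
  obtain l where l: "mset l = X" using ex_mset by blast
  define xs where "xs = sort_key (\<lambda>x. a \<bullet> x) l"
  have m: "mset xs = X" unfolding xs_def using l by simp
  have "sort_embed X a = sorted_list_of_multiset (mset (map (\<lambda>x. a \<bullet> x) xs))"
    unfolding sort_embed_def using m by simp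
  also have "\<dots> = map (\<lambda>x. a \<bullet> x) xs"
    unfolding sorted_list_of_multiset_mset xs_def by (rule sorted_sort_id) simp
  finally show ?thesis using that m by blast
qed

lemma lower_pointwise:
  fixes X Y :: "'d::euclidean_space multiset"
  assumes "p \<ge> 1" "size X = n" "size Y = n" "n \<ge> 1" "\<delta> > 0"
    and good: "\<forall>x\<in>#X. \<forall>y\<in>#Y. \<delta> * norm (x - y) \<le> \<bar>a \<bullet> (x - y)\<bar>"
  shows "\<delta> / (real n * real DIM('d)) * W1 X Y \<le> lp_dist p (sort_embed X a) (sort_embed Y a)"
proof -
  obtain xs where xs: "mset xs = X" "sort_embed X a = map (\<lambda>x. a \<bullet> x) xs" by (rule sorted_enum)
  obtain ys where ys: "mset ys = Y" "sort_embed Y a = map (\<lambda>x. a \<bullet> x) ys" by (rule sorted_enum)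
  have lx: "length xs = n" using xs assms by (metis size_mset)
  have ly: "length ys = n" using ys assms by (metis size_mset)
  have "W1 X Y \<le> (\<Sum>j<n. l1norm (xs ! j - ys ! (id j)))"
    using W1_le[OF xs(1) ys(1), of id] lx by (simp add: permutes_id)
  also have "\<dots> \<le> (\<Sum>j<n. real DIM('d) * norm (xs ! j - ys ! j))"
    by (rule sum_mono) (simp add: l1norm_le_norm)
  also have "\<dots> \<le> (\<Sum>j<n. real DIM('d) / \<delta> * \<bar>a \<bullet> xs ! j - a \<bullet> ys ! j\<bar>)"
  proof (rule sum_mono)
    fix j assume j: "j \<in> {..<n}"
    have "xs ! j \<in># X" using xs(1) lx j by (metis lessThan_iff nth_mem set_mset_mset)
    moreover have "ys ! j \<in># Y" using ys(1) ly j by (metis lessThan_iff nth_mem set_mset_mset)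
    ultimately have "\<delta> * norm (xs ! j - ys ! j) \<le> \<bar>a \<bullet> xs ! j - a \<bullet> ys ! j\<bar>"
      using good by (simp add: inner_diff_right)
    then have "norm (xs ! j - ys ! j) \<le> \<bar>a \<bullet> xs ! j - a \<bullet> ys ! j\<bar> / \<delta>"
      using assms(5) by (simp add: field_simps)
    then have h: "real DIM('d) * norm (xs ! j - ys ! j) \<le> real DIM('d) * (\<bar>a \<bullet> xs ! j - a \<bullet> ys ! j\<bar> / \<delta>)"
      by (rule mult_left_mono) simp
    then show "real DIM('d) * norm (xs ! j - ys ! j) \<le> real DIM('d) / \<delta> * \<bar>a \<bullet> xs ! j - a \<bullet> ys ! j\<bar>"
      by simp
  qed
  also have "\<dots> = real DIM('d) / \<delta> * (\<Sum>i<n. \<bar>sort_embed X a ! i - sort_embed Y a ! i\<bar>)"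
    using xs ys lx ly by (simp add: sum_distrib_left)
  also have "\<dots> \<le> real DIM('d) / \<delta> * (real n * lp_dist p (sort_embed X a) (sort_embed Y a))"
    using lp_ge_l1[OF assms(1), of "sort_embed X a" "sort_embed Y a"] assms
    by (intro mult_left_mono) auto
  finally have "W1 X Y \<le> real DIM('d) / \<delta> * (real n * lp_dist p (sort_embed X a) (sort_embed Y a))" .
  then show ?thesis using assms(4,5) by (simp add: field_simps)
qed

lemma coord_lipschitz:
  fixes X :: "'d::euclidean_space multiset"
  shows "(\<Sum>i<size X. \<bar>sort_embed X a ! i - sort_embed X b ! i\<bar>) \<le> norm (a - b) * (\<Sum>x\<in>#X. norm x)"
proof -
  define P where "P = image_mset (\<lambda>x. (a \<bullet> x, b \<bullet> x)) X"
  have "sdist P \<le> cost P" by (rule rearr)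
  moreover have "sdist P = (\<Sum>i<size X. \<bar>sort_embed X a ! i - sort_embed X b ! i\<bar>)"
    unfolding sdist_def P_def sort_embed_def by (simp add: multiset.map_comp comp_def)
  moreover have "cost P \<le> norm (a - b) * (\<Sum>x\<in>#X. norm x)"
  proof -
    have "cost P = (\<Sum>x\<in>#X. \<bar>(a - b) \<bullet> x\<bar>)"
      unfolding cost_def P_def by (simp add: multiset.map_comp comp_def inner_diff_left)
    also have "\<dots> \<le> (\<Sum>x\<in>#X. norm (a - b) * norm x)"
      by (rule sum_mset_mono) (rule Cauchy_Schwarz_ineq2)
    also have "\<dots> = norm (a - b) * (\<Sum>x\<in>#X. norm x)" by (simp add: sum_mset_distrib_left)
    finally show ?thesis .
  qed
  ultimately show ?thesis by simp
qed

lemma coord_continuous: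
  fixes X :: "'d::euclidean_space multiset"
  assumes "i < size X"
  shows "continuous_on UNIV (\<lambda>a. sort_embed X a ! i)"
proof (rule lipschitz_on_continuous_on)
  show "(\<Sum>x\<in>#X. norm x)-lipschitz_on UNIV (\<lambda>a. sort_embed X a ! i)"
  proof (rule lipschitz_onI)
    fix a b :: 'd
    have "\<bar>sort_embed X a ! i - sort_embed X b ! i\<bar> \<le> (\<Sum>i<size X. \<bar>sort_embed X a ! i - sort_embed X b ! i\<bar>)"
      using assms by (intro member_le_sum) auto
    also have "\<dots> \<le> norm (a - b) * (\<Sum>x\<in>#X. norm x)" by (rule coord_lipschitz)
    finally show "dist (sort_embed X a ! i) (sort_embed X b ! i) \<le> (\<Sum>x\<in>#X. norm x) * dist a b"
      by (simp add: dist_norm dist_real_def mult.commute)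
  next
    show "0 \<le> (\<Sum>x\<in>#X. norm x)" by (induction X) auto
  qed
qed

lemma nth_beyond: "length l \<le> i \<Longrightarrow> l ! i = [] ! (i - length l)"
proof (induction l arbitrary: i)
  case Nil then show ?case by simp
next
  case (Cons x l) then show ?case by (cases i) auto
qed

lemma coord_meas:
  fixes X :: "'d::euclidean_space multiset"
  shows "(\<lambda>a. sort_embed X a ! i) \<in> borel_measurable borel"
proof (cases "i < size X")
  case True then show ?thesis by (intro borel_measurable_continuous_onI coord_continuous)
next
  case False
  then have "\<And>a. sort_embed X a ! i = [] ! (i - size X)"
    using nth_beyond[of "sort_embed X _" i] by simp
  then show ?thesis by simp
qed

lemma lp_meas:
  fixes X Y :: "'d::euclidean_space multiset"
  assumes "size X = n"
  shows "(\<lambda>a. lp_dist p (sort_embed X a) (sort_embed Y a)) \<in> borel_measurable borel"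
proof -
  have "(\<lambda>a. lp_dist p (sort_embed X a) (sort_embed Y a)) =
     (\<lambda>a. (\<Sum>i<n. \<bar>sort_embed X a ! i - sort_embed Y a ! i\<bar> powr p) powr (1 / p))"
    unfolding lp_dist_def using assms by simp
  also have "\<dots> \<in> borel_measurable borel"
    using coord_meas[of X] coord_meas[of Y] by measurable
  finally show ?thesis .
qed

definition nu :: "'d::euclidean_space measure" where
  "nu = uniform_measure lborel (ball 0 1)"

definition fsph :: "'d::euclidean_space \<Rightarrow> 'd" where
  "fsph x = x /\<^sub>R norm x"

lemma sets_nu[simp, measurable_cong]: "sets nu = sets borel" by (simp add: nu_def)
lemma space_nu[simp]: "space nu = UNIV" by (simp add: nu_def)

lemma nu_prob: "prob_space (nu :: 'd::euclidean_space measure)"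
  unfolding nu_def
proof (rule prob_space_uniform_measure)
  have "measure lborel (ball (0::'d) 1) > 0" using content_ball_pos[of 1 "0::'d"] by simp
  then show "emeasure lborel (ball (0::'d) 1) \<noteq> 0"
  proof -
    have fin: "emeasure lborel (ball (0::'d) 1) \<noteq> top" using emeasure_lborel_ball_finite[of "0::'d" 1] by simp
    show ?thesis using emeasure_eq_ennreal_measure[OF fin] \<open>measure lborel (ball (0::'d) 1) > 0\<close> by simp
  qed
  show "emeasure lborel (ball (0::'d) 1) \<noteq> \<infinity>"
    using emeasure_lborel_ball_finite[of "0::'d" 1] by simp
qed

interpretation nuP: prob_space "nu :: 'd::euclidean_space measure" by (rule nu_prob)

lemma fsph_meas[measurable]: "fsph \<in> borel_measurable borel"
  unfolding fsph_def by measurable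

lemma norm_fsph: "norm (fsph x) \<le> 1"
  unfolding fsph_def by (cases "x = 0") auto

lemma hyperplane_null:
  fixes u :: "'d::euclidean_space"
  assumes "u \<noteq> 0"
  shows "measure nu {x. x \<bullet> u = 0} = 0"
proof -
  have H: "{x::'d. x \<bullet> u = 0} = {x. u \<bullet> x = 0}" by (auto simp: inner_commute)
  have hb: "{x::'d. u \<bullet> x = 0} \<in> sets borel" by measurable
  have "negligible {x::'d. u \<bullet> x = 0}" using assms by (intro negligible_hyperplane) auto
  then have "{x::'d. u \<bullet> x = 0} \<in> null_sets lebesgue" by (simp add: negligible_iff_null_sets)
  then have N: "{x::'d. u \<bullet> x = 0} \<in> null_sets lborel"
    using null_sets_completion_iff[of "{x::'d. u \<bullet> x = 0}" lborel] hb by simp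
  have "emeasure lborel (ball 0 1 \<inter> {x::'d. u \<bullet> x = 0}) = 0"
  proof -
    have "emeasure lborel (ball 0 1 \<inter> {x::'d. u \<bullet> x = 0}) \<le> emeasure lborel {x::'d. u \<bullet> x = 0}"
      by (rule emeasure_mono) (use hb in auto)
    also have "\<dots> = 0" using N by auto
    finally show ?thesis by simp
  qed
  then have "emeasure nu {x. x \<bullet> u = 0} = 0"
    unfolding nu_def H using hb by simp
  then show ?thesis by (simp add: measure_def)
qed

lemma band_fixed:
  fixes u :: "'d::euclidean_space"
  assumes "norm u = 1" "\<eta> > 0"
  shows "\<exists>\<delta>>0. measure nu {x. \<bar>fsph x \<bullet> u\<bar> < \<delta>} \<le> \<eta>"
proof -
  define A where "A k = {x::'d. \<bar>fsph x \<bullet> u\<bar> < 1 / Suc k}" for k :: nat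
  have As: "range A \<subseteq> sets nu" unfolding A_def by auto
  have dec: "decseq A" unfolding A_def decseq_def
    by (auto simp: frac_le intro: order.strict_trans2)
  have int: "(\<Inter>k. A k) = {x. x \<bullet> u = 0}"
  proof
    show "(\<Inter>k. A k) \<subseteq> {x. x \<bullet> u = 0}"
    proof
      fix x assume x: "x \<in> (\<Inter>k. A k)"
      have "fsph x \<bullet> u = 0"
      proof (rule ccontr)
        assume "fsph x \<bullet> u \<noteq> 0"
        then obtain m where m: "0 < m" "inverse (real m) < \<bar>fsph x \<bullet> u\<bar>"
          using ex_inverse_of_nat_less[of "\<bar>fsph x \<bullet> u\<bar>"] by auto
        define k where "k = m - 1"
        have "Suc k = m" using m unfolding k_def by simp
        then have "inverse (real (Suc k)) < \<bar>fsph x \<bullet> u\<bar>" using m by simp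
        moreover have "x \<in> A k" using x by blast
        ultimately show False unfolding A_def by (simp add: field_simps)
      qed
      then show "x \<in> {x. x \<bullet> u = 0}" unfolding fsph_def by (cases "x = 0") auto
    qed
    show "{x. x \<bullet> u = 0} \<subseteq> (\<Inter>k. A k)"
      unfolding A_def fsph_def by auto
  qed
  have "(\<lambda>k. measure nu (A k)) \<longlonglongrightarrow> measure nu (\<Inter>k. A k)"
    by (rule nuP.finite_Lim_measure_decseq[OF As dec])
  then have "(\<lambda>k. measure nu (A k)) \<longlonglongrightarrow> 0"
  proof -
    have "u \<noteq> 0" using assms by auto
    then show ?thesis using hyperplane_null[of u] int \<open>(\<lambda>k. measure nu (A k)) \<longlonglongrightarrow> measure nu (\<Inter>k. A k)\<close> by simp
  qed
  then have "eventually (\<lambda>k. measure nu (A k) < \<eta>) sequentially"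
    using assms(2) by (rule order_tendstoD)
  then obtain k where "measure nu (A k) < \<eta>" by (meson eventually_sequentially order.refl)
  then show ?thesis unfolding A_def by (intro exI[of _ "1 / Suc k"]) auto
qed

lemma band_uniform:
  assumes "\<eta> > 0"
  shows "\<exists>\<delta>>0. \<forall>u::'d::euclidean_space. norm u = 1 \<longrightarrow> measure nu {x. \<bar>fsph x \<bullet> u\<bar> < \<delta>} \<le> \<eta>"
proof -
  define d where "d u = (SOME \<delta>. \<delta> > 0 \<and> measure nu {x. \<bar>fsph x \<bullet> u\<bar> < \<delta>} \<le> \<eta>)" for u :: 'd
  have d: "d u > 0 \<and> measure nu {x. \<bar>fsph x \<bullet> u\<bar> < d u} \<le> \<eta>" if "norm u = 1" for u
    unfolding d_def using band_fixed[OF that assms] by (rule someI_ex)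
  have cov: "sphere (0::'d) 1 \<subseteq> (\<Union>u\<in>sphere 0 1. ball u (d u / 2))"
  proof
    fix u :: 'd assume u: "u \<in> sphere 0 1"
    then have "d u > 0" using d by simp
    then show "u \<in> (\<Union>u\<in>sphere 0 1. ball u (d u / 2))" using u by (intro UN_I[of u]) auto
  qed
  obtain C where C: "C \<subseteq> sphere 0 1" "finite C" "sphere (0::'d) 1 \<subseteq> (\<Union>u\<in>C. ball u (d u / 2))"
    by (rule compactE_image[OF compact_sphere, where C="sphere 0 1" and f="\<lambda>u. ball u (d u / 2)"])
      (use cov in auto)
  define \<delta> where "\<delta> = Min (insert 1 ((\<lambda>u. d u / 2) ` C))"
  have \<delta>pos: "\<delta> > 0" unfolding \<delta>_def using C d by (subst Min_gr_iff) auto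
  have \<delta>le: "\<delta> \<le> d u / 2" if "u \<in> C" for u unfolding \<delta>_def using C that by (intro Min_le) auto
  show ?thesis
  proof (intro exI[of _ \<delta>] conjI allI impI \<delta>pos)
    fix u :: 'd assume u: "norm u = 1"
    then obtain u0 where u0: "u0 \<in> C" "u \<in> ball u0 (d u0 / 2)" using C by auto
    have nu0: "norm u0 = 1" using u0 C by auto
    have sub: "{x. \<bar>fsph x \<bullet> u\<bar> < \<delta>} \<subseteq> {x. \<bar>fsph x \<bullet> u0\<bar> < d u0}"
    proof
      fix x assume "x \<in> {x. \<bar>fsph x \<bullet> u\<bar> < \<delta>}"
      then have h1: "\<bar>fsph x \<bullet> u\<bar> < \<delta>" by simp
      have "\<bar>fsph x \<bullet> (u0 - u)\<bar> \<le> norm (fsph x) * norm (u0 - u)" by (rule Cauchy_Schwarz_ineq2)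
      also have "\<dots> \<le> norm (u0 - u)" using norm_fsph[of x] by (simp add: mult_left_le_one_le)
      also have "\<dots> < d u0 / 2" using u0(2) by (simp add: dist_norm)
      finally have h2: "\<bar>fsph x \<bullet> (u0 - u)\<bar> < d u0 / 2" .
      have "\<bar>fsph x \<bullet> u0\<bar> \<le> \<bar>fsph x \<bullet> u\<bar> + \<bar>fsph x \<bullet> (u0 - u)\<bar>"
        by (simp add: inner_diff_right)
      then show "x \<in> {x. \<bar>fsph x \<bullet> u0\<bar> < d u0}" using h1 h2 \<delta>le[OF u0(1)] by simp
    qed
    have "measure nu {x. \<bar>fsph x \<bullet> u\<bar> < \<delta>} \<le> measure nu {x. \<bar>fsph x \<bullet> u0\<bar> < d u0}"
      by (rule nuP.finite_measure_mono[OF sub]) simp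
    also have "\<dots> \<le> \<eta>" using d[OF nu0] by simp
    finally show "measure nu {x. \<bar>fsph x \<bullet> u\<bar> < \<delta>} \<le> \<eta>" .
  qed
qed

lemma uniform_sphere_eq: "uniform_sphere = distr nu borel fsph"
  unfolding uniform_sphere_def nu_def fsph_def ..

lemma lp_nonneg: "lp_dist p u v \<ge> 0" unfolding lp_dist_def by simp

lemma card_set_mset_le: "card (set_mset X) \<le> size X"
  by (induction X) (auto simp: card_insert_if)

theorem mainTheorem7:
  fixes \<Omega> :: "'d::euclidean_space set" and n :: nat and p :: real
  assumes "p \<ge> 1" and "compact \<Omega>"
  shows "uniformly_lipschitz sort_embed (S_eq n \<Omega>) (sphere 0 1) W1 (lp_dist p)
       \<and> lower_lipschitz_in_expectation sort_embed (S_eq n \<Omega>) uniform_sphere p W1 (lp_dist p)"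
proof
  show "uniformly_lipschitz sort_embed (S_eq n \<Omega>) (sphere 0 1) W1 (lp_dist p)"
    unfolding uniformly_lipschitz_def
    by (rule exI[of _ 1]) (auto simp: S_eq_def intro!: upper_bound[OF assms(1)])
  show "lower_lipschitz_in_expectation sort_embed (S_eq n \<Omega>) uniform_sphere p W1 (lp_dist p)"
  proof (cases "n = 0")
    case True
    show ?thesis unfolding lower_lipschitz_in_expectation_def
    proof (intro exI[of _ 1] conjI ballI impI)
      fix X Y assume XY: "X \<in> S_eq n \<Omega>" "Y \<in> S_eq n \<Omega>" and W: "0 < W1 X Y"
      then have "X = {#}" "Y = {#}" using True by (auto simp: S_eq_def)
      then have "W1 X Y \<le> 0" using W1_le[of "[]" X "[]" Y id] by (simp add: permutes_id)
      with W show "1 powr p \<le> (\<integral>a. (lp_dist p (sort_embed X a) (sort_embed Y a) / W1 X Y) powr p \<partial>uniform_sphere)"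
        by simp
    qed simp
  next
    case False
    then have n1: "n \<ge> 1" by simp
    define \<eta> where "\<eta> = 1 / (2 * real n ^ 2)"
    have \<eta>pos: "\<eta> > 0" unfolding \<eta>_def using n1 by simp
    obtain \<delta> where \<delta>: "\<delta> > 0"
      and band: "\<And>u::'d. norm u = 1 \<Longrightarrow> measure nu {x. \<bar>fsph x \<bullet> u\<bar> < \<delta>} \<le> \<eta>"
      using band_uniform[OF \<eta>pos] by blast
    define K where "K = \<delta> / (real n * real DIM('d))"
    have Kpos: "K > 0" unfolding K_def using \<delta> n1 by simp
    define c where "c = K * (1/2) powr (1/p)"
    have cpos: "c > 0" unfolding c_def using Kpos by simp
    have cp: "c powr p = K powr p * (1/2)"
      unfolding c_def using Kpos assms(1) by (simp add: powr_mult powr_powr)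
    show ?thesis unfolding lower_lipschitz_in_expectation_def
    proof (intro exI[of _ c] conjI ballI impI cpos)
      fix X Y assume XY: "X \<in> S_eq n \<Omega>" "Y \<in> S_eq n \<Omega>" and Wpos: "0 < W1 X Y"
      have sX: "size X = n" and sY: "size Y = n" using XY by (auto simp: S_eq_def)
      define W where "W = W1 X Y"
      define I where "I = {(x,y). x \<in># X \<and> y \<in># Y \<and> x \<noteq> y}"
      define Bd where "Bd = (\<lambda>(x::'d,y::'d). {a. \<bar>fsph a \<bullet> ((x - y) /\<^sub>R norm (x - y))\<bar> < \<delta>})"
      define B where "B = (\<Union>i\<in>I. Bd i)"
      have Isub: "I \<subseteq> set_mset X \<times> set_mset Y" unfolding I_def by auto
      have Ifin: "finite I" using Isub by (rule finite_subset) simp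
      have cardI: "real (card I) \<le> real n ^ 2"
      proof -
        have "card I \<le> card (set_mset X \<times> set_mset Y)" using Isub by (intro card_mono) auto
        also have "\<dots> = card (set_mset X) * card (set_mset Y)" by (simp add: card_cartesian_product)
        also have "\<dots> \<le> n * n" using card_set_mset_le[of X] card_set_mset_le[of Y] sX sY
          by (intro mult_le_mono) auto
        finally have "real (card I) \<le> real (n * n)" by (simp only: of_nat_le_iff)
        then show ?thesis by (simp add: power2_eq_square)
      qed
      have Bd_sets: "Bd i \<in> sets nu" for i unfolding Bd_def by (cases i) simp
      have Bsets: "B \<in> sets nu" unfolding B_def using Ifin Bd_sets by auto
      have "measure nu B \<le> (\<Sum>i\<in>I. measure nu (Bd i))"
        unfolding B_def using Ifin Bd_sets by (intro nuP.finite_measure_subadditive_finite) auto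
      also have "\<dots> \<le> (\<Sum>i\<in>I. \<eta>)"
      proof (rule sum_mono)
        fix i assume "i \<in> I"
        then obtain x y where i: "i = (x,y)" "x \<noteq> y" unfolding I_def by auto
        have "norm ((x - y) /\<^sub>R norm (x - y)) = 1" using i by simp
        from band[OF this] show "measure nu (Bd i) \<le> \<eta>" unfolding Bd_def i by simp
      qed
      also have "\<dots> = real (card I) * \<eta>" by simp
      also have "\<dots> \<le> real n ^ 2 * \<eta>" using cardI \<eta>pos by (intro mult_right_mono) auto
      also have "\<dots> = 1/2" unfolding \<eta>_def using n1 by simp
      finally have Bmeas: "measure nu B \<le> 1/2" .
      define g where "g a = (lp_dist p (sort_embed X a) (sort_embed Y a) / W) powr p" for a
      have gmeas: "g \<in> borel_measurable borel"
        unfolding g_def using lp_meas[OF sX, of p Y] by measurable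
      have int_eq: "(\<integral>a. g a \<partial>uniform_sphere) = (\<integral>x. g (fsph x) \<partial>nu)"
        unfolding uniform_sphere_eq by (rule integral_distr) (simp_all add: gmeas)
      have good: "\<forall>x\<in>#X. \<forall>y\<in>#Y. \<delta> * norm (x - y) \<le> \<bar>fsph a \<bullet> (x - y)\<bar>" if "a \<notin> B" for a
      proof (intro ballI)
        fix x y assume xy: "x \<in># X" "y \<in># Y"
        show "\<delta> * norm (x - y) \<le> \<bar>fsph a \<bullet> (x - y)\<bar>"
        proof (cases "x = y")
          case True then show ?thesis by simp
        next
          case False
          then have "(x,y) \<in> I" unfolding I_def using xy by simp
          then have "a \<notin> Bd (x,y)" using that unfolding B_def by blast
          then have "\<delta> \<le> \<bar>fsph a \<bullet> ((x - y) /\<^sub>R norm (x - y))\<bar>" unfolding Bd_def by simp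
          also have "\<dots> = \<bar>fsph a \<bullet> (x - y)\<bar> / norm (x - y)" by (simp add: abs_mult divide_inverse mult.commute)
          finally show ?thesis using False by (simp add: field_simps)
        qed
      qed
      have pw: "indicator (UNIV - B) x * K powr p \<le> g (fsph x)" for x
      proof (cases "x \<in> B")
        case True then show ?thesis unfolding g_def by simp
      next
        case False
        have "K * W \<le> lp_dist p (sort_embed X (fsph x)) (sort_embed Y (fsph x))"
          unfolding K_def W_def by (rule lower_pointwise[OF assms(1) sX sY n1 \<delta> good[OF False]])
        then have "K \<le> lp_dist p (sort_embed X (fsph x)) (sort_embed Y (fsph x)) / W"
          using Wpos unfolding W_def by (simp add: field_simps)
        then have "K powr p \<le> g (fsph x)" unfolding g_def using Kpos assms(1)
          by (intro powr_mono2) auto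
        then show ?thesis using False by simp
      qed
      have integ: "integrable nu (\<lambda>x. g (fsph x))"
      proof (rule nuP.integrable_const_bound[where B=1])
        show "AE x in nu. norm (g (fsph x)) \<le> 1"
        proof (intro AE_I2)
          fix x
          have "lp_dist p (sort_embed X (fsph x)) (sort_embed Y (fsph x)) \<le> W"
            unfolding W_def using upper_bound[OF assms(1), of X Y "fsph x"] sX sY norm_fsph[of x] by simp
          then have "lp_dist p (sort_embed X (fsph x)) (sort_embed Y (fsph x)) / W \<le> 1"
            using Wpos unfolding W_def by simp
          moreover have "0 \<le> lp_dist p (sort_embed X (fsph x)) (sort_embed Y (fsph x)) / W"
            using Wpos lp_nonneg unfolding W_def by simp
          ultimately have "g (fsph x) \<le> 1" unfolding g_def using assms(1)
            by (intro powr_le1) auto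
          then show "norm (g (fsph x)) \<le> 1" unfolding g_def by simp
        qed
        show "(\<lambda>x. g (fsph x)) \<in> borel_measurable nu" using gmeas by measurable
      qed
      have "(\<integral>x. indicator (UNIV - B) x * K powr p \<partial>nu) \<le> (\<integral>x. g (fsph x) \<partial>nu)"
      proof (rule integral_mono[OF _ integ])
        show "integrable nu (\<lambda>x. indicator (UNIV - B) x * K powr p)"
        proof -
          have "emeasure nu (UNIV - B) < \<infinity>" using nuP.emeasure_finite[of "UNIV - B"] by (simp add: less_top[symmetric])
          then show ?thesis using Bsets by (intro integrable_mult_left integrable_real_indicator) auto
        qed
        show "\<And>x. x \<in> space nu \<Longrightarrow> indicator (UNIV - B) x * K powr p \<le> g (fsph x)" using pw by blast
      qed
      moreover have "(\<integral>x. indicator (UNIV - B) x * K powr p \<partial>nu) = measure nu (UNIV - B) * K powr p"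
        by simp
      moreover have "measure nu (UNIV - B) = 1 - measure nu B"
        using nuP.prob_compl[OF Bsets] by simp
      ultimately have "(1 - measure nu B) * K powr p \<le> (\<integral>a. g a \<partial>uniform_sphere)"
        using int_eq by simp
      moreover have "c powr p \<le> (1 - measure nu B) * K powr p"
      proof -
        have "K powr p * (1/2) \<le> K powr p * (1 - measure nu B)"
          using Bmeas by (intro mult_left_mono) auto
        then show ?thesis unfolding cp by (simp add: mult.commute)
      qed
      ultimately show "c powr p \<le> (\<integral>a. (lp_dist p (sort_embed X a) (sort_embed Y a) / W1 X Y) powr p \<partial>uniform_sphere)"
        unfolding g_def W_def by (simp add: mult.commute)
    qed
  qed
qed

end
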